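(* The function $$f(x,y)=\frac{(x+1)\log(x+y)}{(x+y)\big(\log(x+y)-\log y\big)},\qquad x>0,\ y\in\mathbb N_+,$$ is monotonically increasing in $y$ for every fixed $x>0$, and monotonically decreasing in $x$ for every fixed positive integer $y$.
   Context: $\log$ denotes the natural logarithm and $\mathbb N_+=\{1,2,3,\dots\}$. *)

theory Defs
  imports Complex_Main
begin

definition f5 :: "real \<Rightarrow> real \<Rightarrow> real" where
  "f5 x y = (x + 1) * ln (x + y) / ((x + y) * (ln (x + y) - ln y))"

end

theory Submission
  imports Defs
begin
lemma exp_ge2: assumes "(0::real) \<le> d" shows "1 + d + d^2/2 \<le> exp d"
proof -
  have "(\<lambda>z. 1 + z + z^2/2) 0 - exp 0 \<ge> (\<lambda>z. 1 + z + z^2/2 - exp z) d"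
    apply (rule DERIV_nonpos_imp_nonincreasing[OF assms, of "\<lambda>z. 1 + z + z^2/2 - exp z"])
    apply (rule exI[of _ "1 + _ - exp _"])
    apply (intro conjI)
     apply (auto intro!: derivative_eq_intros)
    done
  then show ?thesis by simp
qed

lemma exp_ge3: assumes "(0::real) \<le> d" shows "1 + d + d^2/2 + d^3/6 \<le> exp d"
proof -
  have "(\<lambda>z. 1 + z + z^2/2 + z^3/6) 0 - exp 0 \<ge> (\<lambda>z. 1 + z + z^2/2 + z^3/6 - exp z) d"
    apply (rule DERIV_nonpos_imp_nonincreasing[OF assms, of "\<lambda>z. 1 + z + z^2/2 + z^3/6 - exp z"])
    apply (rule exI[of _ "1 + _ + _ - exp _"])
    apply (intro conjI)
     apply (auto intro!: derivative_eq_intros)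
    using exp_ge2 by (smt (verit))
  then show ?thesis by simp
qed

lemma ln_ge_frac: assumes "(1::real) \<le> y" shows "2*(y-1)/(y+1) \<le> ln y"
proof -
  have "(\<lambda>z. ln z - 2*(z-1)/(z+1)) 1 \<le> (\<lambda>z. ln z - 2*(z-1)/(z+1)) y"
  proof (rule DERIV_nonneg_imp_nondecreasing[OF assms])
    fix z :: real assume z: "1 \<le> z" "z \<le> y"
    have "DERIV (\<lambda>z. ln z - 2*(z-1)/(z+1)) z :> 1/z - 4/(z+1)^2"
      using z by (auto intro!: derivative_eq_intros simp: field_simps power2_eq_square)
    moreover have "1/z - 4/(z+1)^2 = (z-1)^2/(z*(z+1)^2)"
    proof -
      have "1/z - 4/(z+1)^2 = ((z+1)^2 - 4*z)/(z*(z+1)^2)" using z by (simp add: field_simps)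
      also have "(z+1)^2 - 4*z = (z-1)^2" by algebra
      finally show ?thesis .
    qed
    moreover have "(z-1)^2/(z*(z+1)^2) \<ge> 0" using z by simp
    ultimately show "\<exists>d. DERIV (\<lambda>z. ln z - 2*(z-1)/(z+1)) z :> d \<and> 0 \<le> d" by auto
  qed
  then show ?thesis by simp
qed

lemma keyA: assumes "(1::real) \<le> y" "0 \<le> D"
  shows "(y-1)*D^2 \<le> ln y * (y*(exp D - 1 - D) + D + 1)"
proof -
  define a where "a = (y-1)/(y+1)"
  have a0: "a \<ge> 0" using assms by (simp add: a_def)
  have l: "ln y \<ge> 2*a" using ln_ge_frac[OF assms(1)] by (simp add: a_def)
  have e: "exp D - 1 - D \<ge> D^2/2 + D^3/6" using exp_ge3[OF assms(2)] by simp
  have "ln y * (y*(exp D - 1 - D) + D + 1) \<ge> ln y * (y*(D^2/2 + D^3/6) + D + 1)"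
    using e assms by (intro mult_left_mono) auto
  moreover have "(y-1) - y*ln y/2 \<le> a"
  proof -
    have "y*ln y/2 \<ge> y*a" using l assms by simp
    moreover have "y - 1 - y*a = a" using assms by (simp add: a_def field_simps)
    ultimately show ?thesis by linarith
  qed
  moreover have "ln y * y * D^3/6 \<ge> a * D^3/3"
  proof -
    have "ln y * y \<ge> 2*a" proof -
      have "ln y * 1 \<le> ln y * y" using assms by (intro mult_left_mono) auto
      thus ?thesis using l by simp
    qed
    hence "2*a*D^3 \<le> ln y * y * D^3" using assms by (intro mult_right_mono) auto
    thus ?thesis by simp
  qed
  moreover have "ln y * (D+1) \<ge> 2*a*(D+1)" using l assms by (simp add: mult_right_mono)
  moreover have "a*(D^3/3 - D^2 + 2*D + 2) \<ge> 0"
  proof -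
    have "D^2/3 - D + 2 = (D - 3/2)^2/3 + 5/4" by (simp add: power2_eq_square field_simps)
    moreover have "(D - 3/2)^2 \<ge> 0" by simp
    ultimately have "D^2/3 - D + 2 \<ge> 0" by linarith
    hence "D*(D^2/3 - D + 2) \<ge> 0" using assms by simp
    hence "D^3/3 - D^2 + 2*D + 2 \<ge> 0" by (simp add: algebra_simps power2_eq_square power3_eq_cube)
    thus ?thesis using a0 by simp
  qed
  moreover have "((y-1) - y*ln y/2)*D^2 \<le> a*D^2"
    using \<open>(y-1) - y*ln y/2 \<le> a\<close> by (intro mult_right_mono) auto
  moreover have "ln y * (y*(D^2/2 + D^3/6) + D + 1) = (y*ln y/2)*D^2 + ln y*y*D^3/6 + ln y*(D+1)"
    by (simp add: algebra_simps)
  moreover have "a*(D^3/3 - D^2 + 2*D + 2) = a*D^3/3 + 2*a*(D+1) - a*D^2"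
    by (simp add: algebra_simps)
  moreover have "((y-1) - y*ln y/2)*D^2 = (y-1)*D^2 - (y*ln y/2)*D^2"
    by (simp add: algebra_simps)
  ultimately show ?thesis by argo
qed

lemma ymono: assumes x: "(x::real) > 0" and y: "1 \<le> y1" "y1 \<le> y2"
  shows "f5 x y1 \<le> f5 x y2"
  unfolding f5_def
proof (rule DERIV_nonneg_imp_nondecreasing[OF y(2)])
  fix z assume z: "y1 \<le> z" "z \<le> y2"
  hence z1: "z \<ge> 1" using y by simp
  define L where "L = ln (x+z)"
  define D where "D = ln (x+z) - ln z"
  have N: "DERIV (\<lambda>z. (x+1)*ln(x+z)) z :> (x+1)*(1/(x+z))"
    using x z1 by (auto intro!: derivative_eq_intros)
  have Dn: "DERIV (\<lambda>z. (x+z)*(ln(x+z) - ln z)) z :> 1*(ln(x+z)-ln z) + (x+z)*(1/(x+z) - 1/z)"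
    using x z1 by (auto intro!: derivative_eq_intros)
  have Dpos: "D > 0" unfolding D_def using x z1 by simp
  have L0: "L \<ge> 0" unfolding L_def using x z1 by simp
  have Dle: "D \<le> x/z"
  proof -
    have "D = ln ((x+z)/z)" unfolding D_def using x z1 by (simp add: ln_div)
    also have "\<dots> \<le> (x+z)/z - 1" using x z1 by (intro ln_le_minus_one) auto
    also have "\<dots> = x/z" using z1 by (simp add: field_simps)
    finally show ?thesis .
  qed
  have dpos: "(x+z)*D > 0" using Dpos x z1 by simp
  have num: "(x+1)*(1/(x+z)) * ((x+z)*D) - (x+1)*L * (1*D + (x+z)*(1/(x+z) - 1/z)) = (x+1)*(D + L*(x/z - D))"
  proof -
    have nz: "x + z \<noteq> 0" "z \<noteq> 0" using x z1 by auto
    have a: "(x+1)*(1/(x+z)) * ((x+z)*D) = (x+1)*D" using nz by simp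
    have b: "(x+z)*(1/(x+z) - 1/z) = -(x/z)" using nz by (simp add: right_diff_distrib add_divide_distrib)
    show ?thesis unfolding a b by (simp add: algebra_simps add_divide_distrib)
  qed
  have "D + L*(x/z - D) \<ge> 0" using Dle L0 Dpos by simp
  hence "(x+1)*(1/(x+z)) * ((x+z)*D) - (x+1)*L * (1*D + (x+z)*(1/(x+z) - 1/z)) \<ge> 0"
    unfolding num using x by simp
  hence "((x+1)*(1/(x+z)) * ((x+z)*D) - (x+1)*L * (1*D + (x+z)*(1/(x+z) - 1/z))) / (((x+z)*D) * ((x+z)*D)) \<ge> 0"
    by simp
  moreover have "DERIV (\<lambda>z. (x+1)*ln(x+z) / ((x+z)*(ln(x+z) - ln z))) z :>
     ((x+1)*(1/(x+z)) * ((x+z)*D) - (x+1)*L * (1*D + (x+z)*(1/(x+z) - 1/z))) / (((x+z)*D) * ((x+z)*D))"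
    unfolding D_def L_def by (rule DERIV_divide[OF N Dn]) (use Dpos x z1 in \<open>simp add: D_def\<close>)
  ultimately show "\<exists>d. DERIV (\<lambda>z. (x+1)*ln(x+z) / ((x+z)*(ln(x+z) - ln z))) z :> d \<and> 0 \<le> d" by blast
qed

lemma xmono: assumes y: "(y::real) \<ge> 1" and x: "0 < x1" "x1 \<le> x2"
  shows "f5 x2 y \<le> f5 x1 y"
  unfolding f5_def
proof (rule DERIV_nonpos_imp_nonincreasing[OF x(2)])
  fix z assume z: "x1 \<le> z" "z \<le> x2"
  hence z0: "z > 0" using x by simp
  define L where "L = ln (z+y)"
  define D where "D = ln (z+y) - ln y"
  have N: "DERIV (\<lambda>z. (z+1)*ln(z+y)) z :> 1*ln(z+y) + (z+1)*(1/(z+y))"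
    using y z0 by (auto intro!: derivative_eq_intros)
  have Dn: "DERIV (\<lambda>z. (z+y)*(ln(z+y) - ln y)) z :> 1*(ln(z+y)-ln y) + (z+y)*(1/(z+y))"
    using y z0 by (auto intro!: derivative_eq_intros)
  have Dpos: "D > 0" unfolding D_def using y z0 by simp
  have D0: "D \<ge> 0" using Dpos by simp
  have eD: "exp D = (z+y)/y" unfolding D_def using y z0 by (simp add: exp_diff)
  have LD: "L = ln y + D" unfolding D_def L_def by simp
  have key: "(y-1)*D^2 \<le> ln y * (y*(exp D - 1 - D) + D + 1)" by (rule keyA[OF y D0])
  have key2: "y*(exp D - 1 - D) + D + 1 = z + 1 - y*D + D" unfolding eD using y by (simp add: field_simps)
  have dpos: "(z+y)*D > 0" using Dpos y z0 by simp
  have num: "(1*L + (z+1)*(1/(z+y))) * ((z+y)*D) - (z+1)*L * (1*D + (z+y)*(1/(z+y)))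
      = (y-1)*L*D - (z+1)*ln y"
    using y z0 unfolding LD by (simp add: field_simps)
  have "(y-1)*L*D = (y-1)*ln y*D + (y-1)*D^2" unfolding LD by (simp add: algebra_simps power2_eq_square)
  hence "(y-1)*L*D - (z+1)*ln y \<le> 0" using key unfolding key2 by (simp add: algebra_simps)
  hence "((1*L + (z+1)*(1/(z+y))) * ((z+y)*D) - (z+1)*L * (1*D + (z+y)*(1/(z+y)))) / (((z+y)*D) * ((z+y)*D)) \<le> 0"
    unfolding num using dpos by (intro divide_nonpos_pos) auto
  moreover have "DERIV (\<lambda>z. (z+1)*ln(z+y) / ((z+y)*(ln(z+y) - ln y))) z :>
     ((1*L + (z+1)*(1/(z+y))) * ((z+y)*D) - (z+1)*L * (1*D + (z+y)*(1/(z+y)))) / (((z+y)*D) * ((z+y)*D))"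
    unfolding D_def L_def by (rule DERIV_divide[OF N Dn]) (use Dpos y z0 in \<open>simp add: D_def\<close>)
  ultimately show "\<exists>d. DERIV (\<lambda>z. (z+1)*ln(z+y) / ((z+y)*(ln(z+y) - ln y))) z :> d \<and> d \<le> 0" by blast
qed

theorem lemma5:
  shows "(\<forall>x::real. x > 0 \<longrightarrow>
            (\<forall>y1 y2 :: nat. 1 \<le> y1 \<longrightarrow> y1 \<le> y2 \<longrightarrow> f5 x (real y1) \<le> f5 x (real y2)))
       \<and> (\<forall>y::nat. 1 \<le> y \<longrightarrow>
            (\<forall>x1 x2 :: real. 0 < x1 \<longrightarrow> x1 \<le> x2 \<longrightarrow> f5 x2 (real y) \<le> f5 x1 (real y)))"
  using ymono xmono by simp

end
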